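(* The unique $F$-coalgebra morphism $\varphi_\Pi:\mathbb DA^\infty\to\Omega$ from $(\mathbb DA^\infty,\Pi)$ to the final $F$-coalgebra $(\Omega,\omega)$ is injective.
   Context: $A$ finite alphabet; $A^\infty=A^*\cup A^\omega$ with $\sigma$-algebra $\Sigma_{A^\infty}$ generated by $S_\infty=\{\emptyset\}\cup\{\{w\}\mid w\in A^*\}\cup\{wA^\infty\mid w\in A^*\}$. $\mathbb I=[0,1]$. $\mathbb DA^\infty$ is the set of sub-probability measures on $(A^\infty,\Sigma_{A^\infty})$, with the $\sigma$-algebra generated by $m\mapsto m(S)$. For $m\in\mathbb DA^\infty$ and $a\in A$, the measure derivative is $m_a(S)=m(aS)$. $F$ is the functor $FX=\mathbb I\times\mathbb I\times X^A$, $Ff=\mathrm{id}\times\mathrm{id}\times f^A$. $\Pi:\mathbb DA^\infty\to F\mathbb DA^\infty$ is $\Pi(m)=\langle m(A^\infty),m(\{\varepsilon\}),a\mapsto m_a\rangle$. $\Omega=(\mathbb I\times\mathbb I)^{A^*}$ with $\omega(L)=\langle L(\varepsilon),a\mapsto L_a\rangle$, $L_a(w)=L(aw)$; $(\Omega,\omega)$ is the final $F$-coalgebra, and an $F$-coalgebra morphism from $(Y,\beta)$ to $(\Omega,\omega)$ is a map $\varphi$ with $\omega\circ\varphi=F\varphi\circ\beta$. *)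

theory Defs
  imports "HOL-Probability.Probability" "HOL-Library.Stream"
begin

text \<open>A^\<infinity> = A^* \<union> A^\<omega>: finite words are lists, infinite words are streams.\<close>
type_synonym 'a inf_word = "'a list + 'a stream"

fun app :: "'a list \<Rightarrow> 'a inf_word \<Rightarrow> 'a inf_word" where
  "app w (Inl v) = Inl (w @ v)"
| "app w (Inr s) = Inr (w @- s)"

definition cyl :: "'a list \<Rightarrow> 'a inf_word set" where
  "cyl w = range (app w)"

definition S_inf :: "'a inf_word set set" where
  "S_inf = {{}} \<union> {{Inl w} | w. True} \<union> {cyl w | w. True}"

definition M_inf :: "'a inf_word measure" where
  "M_inf = sigma UNIV S_inf"

definition DA :: "'a inf_word measure set" where
  "DA = {m. sets m = sets M_inf \<and> subprob_space m}"

definition mderiv :: "'a inf_word measure \<Rightarrow> 'a \<Rightarrow> 'a inf_word measure" where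
  "mderiv m a = measure_of (space M_inf) (sets M_inf) (\<lambda>S. emeasure m (app [a] ` S))"

definition Fmap :: "('x \<Rightarrow> 'y) \<Rightarrow> real \<times> real \<times> ('a \<Rightarrow> 'x) \<Rightarrow> real \<times> real \<times> ('a \<Rightarrow> 'y)" where
  "Fmap f t = (fst t, fst (snd t), f \<circ> snd (snd t))"

definition PiC :: "'a inf_word measure \<Rightarrow> real \<times> real \<times> ('a \<Rightarrow> 'a inf_word measure)" where
  "PiC m = (measure m (space M_inf), measure m {Inl []}, \<lambda>a. mderiv m a)"

definition Omega :: "('a list \<Rightarrow> real \<times> real) set" where
  "Omega = {L. \<forall>w. fst (L w) \<in> {0..1} \<and> snd (L w) \<in> {0..1}}"

definition omega :: "('a list \<Rightarrow> real \<times> real) \<Rightarrow> real \<times> real \<times> ('a \<Rightarrow> ('a list \<Rightarrow> real \<times> real))" where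
  "omega L = (fst (L []), snd (L []), \<lambda>a w. L (a # w))"

definition is_F_morphism :: "('a inf_word measure \<Rightarrow> ('a list \<Rightarrow> real \<times> real)) \<Rightarrow> bool" where
  "is_F_morphism phi \<longleftrightarrow>
     (\<forall>m\<in>DA. phi m \<in> Omega \<and> omega (phi m) = Fmap phi (PiC m))"

end

theory Submission
  imports Defs
begin

lemma app_app: "app u (app v x) = app (u @ v) x"
  by (cases x) auto

lemma app_inj: "inj (app w)"
proof (rule injI)
  fix x y assume "app w x = app w y" then show "x = y"
    by (cases x; cases y) auto
qed

lemma mem_cyl: "x \<in> cyl w \<longleftrightarrow> (case x of Inl u \<Rightarrow> prefix w u | Inr s \<Rightarrow> stake (length w) s = w)"
proof (cases x)
  case (Inl u)
  have "Inl u \<in> range (app w) \<longleftrightarrow> prefix w u"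
  proof
    assume "Inl u \<in> range (app w)"
    then obtain y where "Inl u = app w y" by auto
    then show "prefix w u" by (cases y) auto
  next
    assume "prefix w u" then obtain v where "u = w @ v" by (auto simp: prefix_def)
    then have "Inl u = app w (Inl v)" by simp
    then show "Inl u \<in> range (app w)" by blast
  qed
  then show ?thesis using Inl by (simp add: cyl_def)
next
  case (Inr s)
  have "Inr s \<in> range (app w) \<longleftrightarrow> stake (length w) s = w"
  proof
    assume "Inr s \<in> range (app w)"
    then obtain y where "Inr s = app w y" by auto
    then show "stake (length w) s = w" by (cases y) (auto simp: stake_shift)
  next
    assume h: "stake (length w) s = w"
    have "Inr s = app w (Inr (sdrop (length w) s))"
      using stake_sdrop[of "length w" s] h by simp
    then show "Inr s \<in> range (app w)" by blast
  qed
  then show ?thesis using Inr by (simp add: cyl_def)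
qed

lemma cyl_mono: "prefix v w \<Longrightarrow> cyl w \<subseteq> cyl v"
  unfolding cyl_def prefix_def by (auto simp: app_app[symmetric])

lemma cyl_both: assumes "x \<in> cyl v" "x \<in> cyl w" shows "prefix v w \<or> prefix w v"
proof (cases x)
  case (Inl u) then have "prefix v u" "prefix w u" using assms by (auto simp: mem_cyl)
  then show ?thesis by (metis prefix_same_cases)
next
  case (Inr s)
  then have a: "stake (length v) s = v" "stake (length w) s = w" using assms by (auto simp: mem_cyl)
  show ?thesis
  proof (cases "length v \<le> length w")
    case True
    then have "take (length v) w = v" using a take_stake[of "length v" "length w" s] by (simp add: min_def)
    then show ?thesis by (metis take_is_prefix)
  next
    case False
    then have "take (length w) v = w" using a take_stake[of "length w" "length v" s] by (simp add: min_def)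
    then show ?thesis by (metis take_is_prefix)
  qed
qed

lemma cyl_Int: "cyl v \<inter> cyl w \<in> S_inf"
proof (cases "prefix v w")
  case True then have "cyl v \<inter> cyl w = cyl w" using cyl_mono by blast
  then show ?thesis by (auto simp: S_inf_def)
next
  case F: False
  show ?thesis
  proof (cases "prefix w v")
    case True then have "cyl v \<inter> cyl w = cyl v" using cyl_mono by blast
    then show ?thesis by (auto simp: S_inf_def)
  next
    case False
    then have "cyl v \<inter> cyl w = {}" using F cyl_both by blast
    then show ?thesis by (auto simp: S_inf_def)
  qed
qed

lemma Int_stable_S: "Int_stable (S_inf :: 'a inf_word set set)"
proof (rule Int_stableI)
  fix X Y :: "'a inf_word set" assume X: "X \<in> S_inf" and Y: "Y \<in> S_inf"
  have sing: "\<And>u Z. {Inl u} \<inter> (Z::'a inf_word set) \<in> S_inf"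
  proof -
    fix u and Z :: "'a inf_word set"
    have "{Inl u} \<inter> Z = (if Inl u \<in> Z then {Inl u} else {})" by auto
    then show "{Inl u} \<inter> Z \<in> S_inf" by (auto simp: S_inf_def)
  qed
  show "X \<inter> Y \<in> S_inf"
    using X Y unfolding S_inf_def
    apply (elim UnE CollectE exE conjE; simp only: singleton_iff)
    using sing[unfolded S_inf_def] cyl_Int[unfolded S_inf_def]
    by (auto simp: Int_commute)
qed

lemma S_Pow: "S_inf \<subseteq> Pow UNIV" by auto

lemma sets_M: "sets (M_inf :: 'a inf_word measure) = sigma_sets UNIV (S_inf :: 'a inf_word set set)"
  unfolding M_inf_def by (simp add: sets_measure_of)

lemma space_M: "space M_inf = UNIV"
  unfolding M_inf_def by (simp add: space_measure_of_conv)

lemma image_meas: fixes S :: "'a inf_word set" assumes "S \<in> sets M_inf" shows "app [a] ` S \<in> sets M_inf"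
proof -
  have "S \<in> sigma_sets UNIV (S_inf :: 'a inf_word set set)" using assms by (simp add: sets_M)
  then have "app [a] ` S \<in> sigma_sets UNIV (S_inf :: 'a inf_word set set)"
  proof (induction rule: sigma_sets.induct)
    case (Basic X)
    then consider "X = {}" | w where "X = {Inl w}" | w where "X = cyl w"
      unfolding S_inf_def by blast
    then show ?case
    proof cases
      case 1 then show ?thesis by (simp add: sigma_sets.Empty)
    next
      case (2 w) then show ?thesis
        by (intro sigma_sets.Basic) (auto simp: S_inf_def)
    next
      case (3 w)
      then have "app [a] ` X = cyl (a # w)" by (auto simp: cyl_def image_image app_app)
      then show ?thesis by (intro sigma_sets.Basic) (auto simp: S_inf_def)
    qed
  next
    case Empty then show ?case by (simp add: sigma_sets.Empty)
  next
    case (Compl X)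
    have "app [a] ` (UNIV - X) = cyl [a] - app [a] ` X"
      using app_inj[of "[a]"] by (auto simp: cyl_def inj_eq)
    also have "\<dots> = UNIV - ((UNIV - cyl [a]) \<union> app [a] ` X)" by auto
    also have "\<dots> \<in> sigma_sets UNIV S_inf"
      by (intro sigma_sets.Compl sigma_sets_Un Compl) (auto simp: S_inf_def)
    finally show ?case .
  next
    case (Union X)
    then show ?case by (simp add: image_UN sigma_sets.Union)
  qed
  then show ?thesis by (simp add: sets_M)
qed

lemma emeasure_mderiv:
  assumes m: "sets m = sets M_inf" and "S \<in> sets M_inf"
  shows "emeasure (mderiv m a) S = emeasure m (app [a] ` S)"
  unfolding mderiv_def
proof (rule emeasure_measure_of_sigma)
  show "sigma_algebra (space M_inf) (sets M_inf)" by (rule sets.sigma_algebra_axioms)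
  show "positive (sets M_inf) (\<lambda>S. emeasure m (app [a] ` S))" by (simp add: positive_def)
  show "countably_additive (sets M_inf) (\<lambda>S. emeasure m (app [a] ` S))"
  proof (rule countably_additiveI)
    fix A :: "nat \<Rightarrow> 'a inf_word set"
    assume A: "range A \<subseteq> sets M_inf" "disjoint_family A" "\<Union> (range A) \<in> sets M_inf"
    have r: "range (\<lambda>i. app [a] ` A i) \<subseteq> sets m" using A(1) m by (auto intro!: image_meas)
    have d: "disjoint_family (\<lambda>i. app [a] ` A i)"
      using A(2) app_inj[of "[a]"] unfolding disjoint_family_on_def by (auto simp: inj_eq) blast
    have "(\<Sum>i. emeasure m (app [a] ` A i)) = emeasure m (\<Union>i. app [a] ` A i)"
      by (rule suminf_emeasure[OF r d])
    then show "(\<Sum>i. emeasure m (app [a] ` A i)) = emeasure m (app [a] ` \<Union> (range A))"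
      by (simp add: image_UN)
  qed
qed fact

lemma sets_mderiv: "sets (mderiv m a) = sets M_inf"
  unfolding mderiv_def by (simp add: sets_measure_of sets.space_closed)

lemma space_mderiv: "space (mderiv m a) = UNIV"
  using sets_mderiv[of m a] space_M by (metis sets_eq_imp_space_eq)

lemma mderiv_DA: assumes "m \<in> DA" shows "mderiv m a \<in> DA"
proof -
  have sm: "sets m = sets M_inf" "subprob_space m" using assms by (auto simp: DA_def)
  have "emeasure (mderiv m a) (space (mderiv m a)) = emeasure m (app [a] ` UNIV)"
    using emeasure_mderiv[OF sm(1), of UNIV] by (simp add: space_mderiv space_M[symmetric])
  also have "\<dots> \<le> 1" using subprob_space.subprob_emeasure_le_1[OF sm(2)] by simp
  finally show ?thesis unfolding DA_def
    by (auto simp: sets_mderiv space_mderiv intro!: subprob_spaceI)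
qed

lemma measure_mderiv: assumes "sets m = sets M_inf" "S \<in> sets M_inf"
  shows "measure (mderiv m a) S = measure m (app [a] ` S)"
  using emeasure_mderiv[OF assms] by (simp add: measure_def)

lemma cyl_in: "cyl w \<in> sets M_inf"
  unfolding sets_M by (rule sigma_sets.Basic) (auto simp: S_inf_def)
lemma sing_in: "{Inl w} \<in> sets M_inf"
  unfolding sets_M by (rule sigma_sets.Basic) (auto simp: S_inf_def)

lemma app_Nil: "app [] x = x" by (cases x) auto
lemma cyl_Nil: "cyl [] = UNIV" by (simp add: cyl_def app_Nil)

lemma phi_char:
  assumes phi: "is_F_morphism phi" and m: "m \<in> DA"
  shows "phi m w = (measure m (cyl w), measure m {Inl w})"
  using m
proof (induction w arbitrary: m)
  case Nil
  have "omega (phi m) = Fmap phi (PiC m)" using phi Nil unfolding is_F_morphism_def by blast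
  then have "fst (phi m []) = measure m (space M_inf)" "snd (phi m []) = measure m {Inl []}"
    unfolding omega_def Fmap_def PiC_def by auto
  moreover have "cyl [] = space M_inf" by (simp add: space_M cyl_Nil)
  ultimately show ?case by (metis prod.collapse)
next
  case (Cons a w)
  have "omega (phi m) = Fmap phi (PiC m)" using phi Cons.prems unfolding is_F_morphism_def by blast
  then have "(\<lambda>w. phi m (a # w)) = phi (mderiv m a)"
    unfolding omega_def Fmap_def PiC_def by (auto dest!: fun_cong[where x=a])
  then have "phi m (a # w) = phi (mderiv m a) w" by metis
  also have "\<dots> = (measure (mderiv m a) (cyl w), measure (mderiv m a) {Inl w})"
    using Cons.IH[OF mderiv_DA[OF Cons.prems]] .
  also have "\<dots> = (measure m (app [a] ` cyl w), measure m (app [a] ` {Inl w}))"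
    using Cons.prems by (simp add: DA_def measure_mderiv cyl_in sing_in)
  also have "app [a] ` cyl w = cyl (a # w)" by (auto simp: cyl_def image_image app_app)
  finally show ?case by simp
qed

theorem mainTheorem9:
  fixes phi :: "('a::finite) inf_word measure \<Rightarrow> ('a list \<Rightarrow> real \<times> real)"
  assumes "is_F_morphism phi"
  shows "inj_on phi DA"
proof (rule inj_onI)
  fix m n assume m: "m \<in> DA" and n: "n \<in> DA" and eq: "phi m = phi n"
  have sm: "sets m = sets M_inf" "subprob_space m" and sn: "sets n = sets M_inf" "subprob_space n"
    using m n by (auto simp: DA_def)
  interpret M: subprob_space m by (rule sm(2))
  interpret N: subprob_space n by (rule sn(2))
  have em: "measure m X = measure n X" if "X \<in> S_inf" for X
  proof -
    from that consider "X = {}" | w where "X = {Inl w}" | w where "X = cyl w"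
      unfolding S_inf_def by blast
    then show ?thesis
    proof cases
      case 1 then show ?thesis by simp
    next
      case (2 w) then show ?thesis
        using phi_char[OF assms m, of w] phi_char[OF assms n, of w] eq by simp
    next
      case (3 w) then show ?thesis
        using phi_char[OF assms m, of w] phi_char[OF assms n, of w] eq by simp
    qed
  qed
  show "m = n"
  proof (rule measure_eqI_generator_eq[OF Int_stable_S S_Pow, where A="\<lambda>_. cyl []"])
    fix X :: "'a inf_word set" assume X: "X \<in> S_inf"
    then have "X \<in> sets M_inf" by (simp add: sets_M)
    then show "emeasure m X = emeasure n X"
      using em[OF X] sm sn by (simp add: M.emeasure_eq_measure N.emeasure_eq_measure)
  next
    show "sets m = sigma_sets UNIV S_inf" using sm by (simp add: sets_M)
    show "sets n = sigma_sets UNIV S_inf" using sn by (simp add: sets_M)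
    show "range (\<lambda>_. cyl []) \<subseteq> S_inf" by (auto simp: S_inf_def)
    show "(\<Union>i. cyl []) = (UNIV :: 'a inf_word set)" by (simp add: cyl_Nil)
    show "\<And>i. emeasure m (cyl []) \<noteq> \<infinity>" by (simp add: M.emeasure_eq_measure)
  qed
qed

end
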